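(* Let $G=(V,E)$ be an undirected graph with capacities $c\colon E\to\mathbb{Z}_{>0}$ and lower bounds $\ell\colon E\to\mathbb{Z}_{\ge0}$ with $\ell(e)\le c(e)$. Let $G^2$ be the multigraph obtained by replacing each edge $e=uv$ by one "heavy" edge $uv$ of weight $(c(e)+\ell(e))/2$ and $c(e)-\ell(e)$ "light" edges $uv$ of weight $1/2$. Then there exist an orientation of $G$ and an integer circulation $f$ on the resulting directed graph with $\ell(a)\le f(a)\le c(a)$ for every arc $a$ if and only if $G^2$ has an orientation in which, for every vertex, the total weight of incoming edges equals the total weight of outgoing edges.
   Context: A circulation on a directed graph is a function $f$ on arcs with nonnegative values such that at every vertex the total inflow equals the total outflow. An orientation chooses a direction for each edge (of a multigraph, each parallel edge separately). *)

theory Defs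
  imports Complex_Main
begin

text \<open>An undirected multigraph is given by a vertex set V, an edge index set E and
  a map ends assigning to each edge its two endpoints (listed in an arbitrary
  reference order).\<close>

definition otail :: "('e \<Rightarrow> 'v \<times> 'v) \<Rightarrow> ('e \<Rightarrow> bool) \<Rightarrow> 'e \<Rightarrow> 'v" where
  "otail ends ori e = (if ori e then fst (ends e) else snd (ends e))"

definition ohead :: "('e \<Rightarrow> 'v \<times> 'v) \<Rightarrow> ('e \<Rightarrow> bool) \<Rightarrow> 'e \<Rightarrow> 'v" where
  "ohead ends ori e = (if ori e then snd (ends e) else fst (ends e))"

definition undirected_multigraph :: "'v set \<Rightarrow> 'e set \<Rightarrow> ('e \<Rightarrow> 'v \<times> 'v) \<Rightarrow> bool" where
  "undirected_multigraph V E ends \<longleftrightarrow> finite V \<and> finite E \<and>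
     (\<forall>e\<in>E. fst (ends e) \<in> V \<and> snd (ends e) \<in> V)"

definition is_circulation ::
  "'v set \<Rightarrow> 'e set \<Rightarrow> ('e \<Rightarrow> 'v) \<Rightarrow> ('e \<Rightarrow> 'v) \<Rightarrow> ('e \<Rightarrow> 'a::ordered_comm_monoid_add) \<Rightarrow> bool" where
  "is_circulation V E tlf hdf f \<longleftrightarrow> (\<forall>a\<in>E. 0 \<le> f a) \<and>
     (\<forall>v\<in>V. (\<Sum>a\<in>{a\<in>E. hdf a = v}. f a) = (\<Sum>a\<in>{a\<in>E. tlf a = v}. f a))"

text \<open>The multigraph G^2: edge (e, None) is the heavy copy of e, edges (e, Some i)
  with i < c e - l e are the light copies.\<close>
definition sq_edges :: "'e set \<Rightarrow> ('e \<Rightarrow> int) \<Rightarrow> ('e \<Rightarrow> int) \<Rightarrow> ('e \<times> nat option) set" where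
  "sq_edges E c l = {(e, None) | e. e \<in> E} \<union> {(e, Some i) | e i. e \<in> E \<and> int i < c e - l e}"

definition sq_ends :: "('e \<Rightarrow> 'v \<times> 'v) \<Rightarrow> ('e \<times> nat option) \<Rightarrow> 'v \<times> 'v" where
  "sq_ends ends x = ends (fst x)"

definition sq_weight :: "('e \<Rightarrow> int) \<Rightarrow> ('e \<Rightarrow> int) \<Rightarrow> ('e \<times> nat option) \<Rightarrow> real" where
  "sq_weight c l x = (case snd x of None \<Rightarrow> (real_of_int (c (fst x)) + real_of_int (l (fst x))) / 2
                                   | Some _ \<Rightarrow> 1 / 2)"

definition balanced_orientation ::
  "'v set \<Rightarrow> 'x set \<Rightarrow> ('x \<Rightarrow> 'v \<times> 'v) \<Rightarrow> ('x \<Rightarrow> real) \<Rightarrow> ('x \<Rightarrow> bool) \<Rightarrow> bool" where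
  "balanced_orientation V X ends w ori \<longleftrightarrow>
     (\<forall>v\<in>V. (\<Sum>x\<in>{x\<in>X. ohead ends ori x = v}. w x) = (\<Sum>x\<in>{x\<in>X. otail ends ori x = v}. w x))"

end

theory Submission
  imports Defs
begin

definition dd :: "('e \<Rightarrow> 'v \<times> 'v) \<Rightarrow> ('e \<Rightarrow> bool) \<Rightarrow> 'e \<Rightarrow> 'v \<Rightarrow> real" where
  "dd ends ori e v = (if ohead ends ori e = v then 1 else 0) - (if otail ends ori e = v then 1 else 0)"

lemma sq_eq: "sq_edges E c l = (\<lambda>e. (e, None::nat option)) ` E \<union>
   (\<lambda>(e,i). (e, Some i)) ` (SIGMA e:E. {..<nat (c e - l e)})"
  unfolding sq_edges_def by (auto simp: image_iff) 

lemma sq_fin: "finite E \<Longrightarrow> finite (sq_edges E c l)"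
  unfolding sq_eq by auto

lemma sum_sq:
  assumes "finite E"
  shows "(\<Sum>x\<in>sq_edges E c l. h x) =
         (\<Sum>e\<in>E. h (e, None) + (\<Sum>i<nat (c e - l e). h (e, Some i)))"
proof -
  let ?A = "(\<lambda>e. (e, None::nat option)) ` E"
  let ?B = "(\<lambda>(e,i). (e, Some i)) ` (SIGMA e:E. {..<nat (c e - l e)})"
  have eq: "sq_edges E c l = ?A \<union> ?B" by (rule sq_eq)
  have fA: "finite ?A" using assms by simp
  have fS: "finite (SIGMA e:E. {..<nat (c e - l e)})" using assms by auto
  have fB: "finite ?B" using fS by simp
  have dis: "?A \<inter> ?B = {}" by auto
  have sA: "(\<Sum>x\<in>?A. h x) = (\<Sum>e\<in>E. h (e, None))"
    by (subst sum.reindex) (auto simp: inj_on_def)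
  have "(\<Sum>x\<in>?B. h x) = (\<Sum>p\<in>(SIGMA e:E. {..<nat (c e - l e)}). h (fst p, Some (snd p)))"
    by (subst sum.reindex) (auto simp: inj_on_def case_prod_beta)
  also have "\<dots> = (\<Sum>e\<in>E. \<Sum>i<nat (c e - l e). h (e, Some i))"
    using assms by (simp add: sum.Sigma case_prod_beta)
  finally have sB: "(\<Sum>x\<in>?B. h x) = (\<Sum>e\<in>E. \<Sum>i<nat (c e - l e). h (e, Some i))" .
  show ?thesis unfolding eq
    by (subst sum.union_disjoint[OF fA fB dis]) (simp add: sA sB sum.distrib)
qed

lemma dd_copy:
  "dd (sq_ends ends) ori2 (e, j) v =
   (if ori2 (e, j) = ori2 (e, None) then 1 else -1) * dd ends (\<lambda>e. ori2 (e, None)) e v"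
  unfolding dd_def ohead_def otail_def sq_ends_def by auto

lemma sum_pm:
  "(\<Sum>i<n. if P i then 1 else -1 :: real) = 2 * real (card {i\<in>{..<n}. P i}) - real n"
proof -
  have "(\<Sum>i<n. if P i then 1 else -1 :: real) = (\<Sum>i<n. 2 * (if P i then 1 else 0) - 1)"
    by (rule sum.cong) auto
  also have "\<dots> = 2 * (\<Sum>i<n. (if P i then 1 else 0)) - real n"
    by (simp add: sum_subtractf sum_distrib_left)
  also have "(\<Sum>i<n. (if P i then 1 else 0 :: real)) = real (card {i\<in>{..<n}. P i})"
    by (simp add: sum.inter_filter[symmetric])
  finally show ?thesis .
qed

lemma diff_filter:
  assumes "finite X"
  shows "(\<Sum>x\<in>{x\<in>X. ohead ends ori x = v}. (w x::real)) - (\<Sum>x\<in>{x\<in>X. otail ends ori x = v}. w x)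
         = (\<Sum>x\<in>X. w x * dd ends ori x v)"
  using assms
  by (simp add: sum.inter_filter sum_subtractf[symmetric]) (rule sum.cong, auto simp: dd_def)

definition kk :: "('e \<Rightarrow> int) \<Rightarrow> ('e \<Rightarrow> int) \<Rightarrow> ('e \<times> nat option \<Rightarrow> bool) \<Rightarrow> 'e \<Rightarrow> nat" where
  "kk c l ori2 e = card {i\<in>{..<nat (c e - l e)}. ori2 (e, Some i) = ori2 (e, None)}"

lemma L1:
  assumes "finite E" "\<forall>e\<in>E. l e \<le> c e"
  shows "(\<Sum>x\<in>{x\<in>sq_edges E c l. ohead (sq_ends ends) ori2 x = v}. sq_weight c l x)
       - (\<Sum>x\<in>{x\<in>sq_edges E c l. otail (sq_ends ends) ori2 x = v}. sq_weight c l x)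
       = (\<Sum>e\<in>E. real_of_int (l e + int (kk c l ori2 e)) * dd ends (\<lambda>e. ori2 (e, None)) e v)"
proof -
  have fX: "finite (sq_edges E c l)" using sq_fin[OF assms(1)] .
  let ?D = "\<lambda>e. dd ends (\<lambda>e. ori2 (e, None)) e v"
  have "lhs = (\<Sum>x\<in>sq_edges E c l. sq_weight c l x * dd (sq_ends ends) ori2 x v)"
    if "lhs = (\<Sum>x\<in>{x\<in>sq_edges E c l. ohead (sq_ends ends) ori2 x = v}. sq_weight c l x)
       - (\<Sum>x\<in>{x\<in>sq_edges E c l. otail (sq_ends ends) ori2 x = v}. sq_weight c l x)" for lhs
    using that diff_filter[OF fX] by simp
  then have "(\<Sum>x\<in>{x\<in>sq_edges E c l. ohead (sq_ends ends) ori2 x = v}. sq_weight c l x)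
       - (\<Sum>x\<in>{x\<in>sq_edges E c l. otail (sq_ends ends) ori2 x = v}. sq_weight c l x)
       = (\<Sum>x\<in>sq_edges E c l. sq_weight c l x * dd (sq_ends ends) ori2 x v)" by blast
  also have "\<dots> = (\<Sum>e\<in>E. sq_weight c l (e, None) * dd (sq_ends ends) ori2 (e, None) v +
        (\<Sum>i<nat (c e - l e). sq_weight c l (e, Some i) * dd (sq_ends ends) ori2 (e, Some i) v))"
    by (rule sum_sq[OF assms(1)])
  also have "\<dots> = (\<Sum>e\<in>E. real_of_int (l e + int (kk c l ori2 e)) * ?D e)"
  proof (rule sum.cong[OF refl])
    fix e assume e: "e \<in> E"
    let ?n = "nat (c e - l e)"
    let ?k = "kk c l ori2 e"
    have "(\<Sum>i<?n. sq_weight c l (e, Some i) * dd (sq_ends ends) ori2 (e, Some i) v)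
        = (\<Sum>i<?n. (if ori2 (e, Some i) = ori2 (e, None) then 1 else -1)) * ?D e / 2"
      by (simp add: dd_copy sq_weight_def sum_distrib_right sum_divide_distrib)
    also have "\<dots> = (2 * real ?k - real ?n) * ?D e / 2"
      by (simp add: sum_pm kk_def)
    finally have s: "(\<Sum>i<?n. sq_weight c l (e, Some i) * dd (sq_ends ends) ori2 (e, Some i) v)
        = (2 * real ?k - real ?n) * ?D e / 2" .
    have n: "real ?n = real_of_int (c e) - real_of_int (l e)" using assms(2) e by simp
    show "sq_weight c l (e, None) * dd (sq_ends ends) ori2 (e, None) v +
        (\<Sum>i<?n. sq_weight c l (e, Some i) * dd (sq_ends ends) ori2 (e, Some i) v)
        = real_of_int (l e + int ?k) * ?D e"
      unfolding s n by (simp add: dd_copy sq_weight_def field_simps)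
  qed
  finally show ?thesis .
qed

lemma L2:
  assumes "finite E"
  shows "real_of_int (\<Sum>a\<in>{a\<in>E. ohead ends ori a = v}. (f a::int))
       - real_of_int (\<Sum>a\<in>{a\<in>E. otail ends ori a = v}. f a)
       = (\<Sum>e\<in>E. real_of_int (f e) * dd ends ori e v)"
  using diff_filter[OF assms, where w="\<lambda>a. real_of_int (f a)" and ends=ends and ori=ori and v=v] by simp


lemma circ_iff:
  assumes "finite E"
  shows "(\<forall>v\<in>V. (\<Sum>a\<in>{a\<in>E. ohead ends ori a = v}. (f a::int)) = (\<Sum>a\<in>{a\<in>E. otail ends ori a = v}. f a))
     \<longleftrightarrow> (\<forall>v\<in>V. (\<Sum>e\<in>E. real_of_int (f e) * dd ends ori e v) = 0)"
proof -
  have "(\<Sum>a\<in>{a\<in>E. ohead ends ori a = v}. (f a::int)) = (\<Sum>a\<in>{a\<in>E. otail ends ori a = v}. f a)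
     \<longleftrightarrow> (\<Sum>e\<in>E. real_of_int (f e) * dd ends ori e v) = 0" for v
    unfolding L2[OF assms, symmetric] by (simp only: right_minus_eq of_int_eq_iff)
  then show ?thesis by blast
qed

lemma bal_iff:
  assumes "finite E" "\<forall>e\<in>E. l e \<le> c e"
  shows "balanced_orientation V (sq_edges E c l) (sq_ends ends) (sq_weight c l) ori2
     \<longleftrightarrow> (\<forall>v\<in>V. (\<Sum>e\<in>E. real_of_int (l e + int (kk c l ori2 e)) * dd ends (\<lambda>e. ori2 (e, None)) e v) = 0)"
  unfolding balanced_orientation_def L1[OF assms, symmetric] by (simp only: right_minus_eq)

theorem mainTheorem5:
  fixes V :: "'v set" and E :: "'e set" and ends :: "'e \<Rightarrow> 'v \<times> 'v"
    and c l :: "'e \<Rightarrow> int"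
  assumes "undirected_multigraph V E ends"
    and "\<forall>e\<in>E. 0 < c e"
    and "\<forall>e\<in>E. 0 \<le> l e \<and> l e \<le> c e"
  shows "(\<exists>ori :: 'e \<Rightarrow> bool. \<exists>f :: 'e \<Rightarrow> int.
            is_circulation V E (otail ends ori) (ohead ends ori) f \<and>
            (\<forall>e\<in>E. l e \<le> f e \<and> f e \<le> c e))
     \<longleftrightarrow> (\<exists>ori2 :: 'e \<times> nat option \<Rightarrow> bool.
            balanced_orientation V (sq_edges E c l) (sq_ends ends) (sq_weight c l) ori2)"
proof
  have fE: "finite E" using assms(1) unfolding undirected_multigraph_def by blast
  have lc: "\<forall>e\<in>E. l e \<le> c e" using assms(3) by blast
  {
    assume "\<exists>ori f. is_circulation V E (otail ends ori) (ohead ends ori) f \<and> (\<forall>e\<in>E. l e \<le> f e \<and> f e \<le> c e)"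
    then obtain ori and f :: "'e \<Rightarrow> int" where circ: "is_circulation V E (otail ends ori) (ohead ends ori) f"
      and b: "\<forall>e\<in>E. l e \<le> f e \<and> f e \<le> c e" by blast
    define ori2 where "ori2 x = (case snd x of None \<Rightarrow> ori (fst x)
        | Some i \<Rightarrow> (if int i < f (fst x) - l (fst x) then ori (fst x) else \<not> ori (fst x)))" for x
    have o: "(\<lambda>e. ori2 (e, None)) = ori" by (simp add: ori2_def)
    have k: "l e + int (kk c l ori2 e) = f e" if e: "e \<in> E" for e
    proof -
      have "{i\<in>{..<nat (c e - l e)}. ori2 (e, Some i) = ori2 (e, None)} = {..<nat (f e - l e)}"
        using b e by (auto simp: ori2_def)
      then show ?thesis using b e by (simp add: kk_def)
    qed
    have "\<forall>v\<in>V. (\<Sum>a\<in>{a\<in>E. ohead ends ori a = v}. f a) = (\<Sum>a\<in>{a\<in>E. otail ends ori a = v}. f a)"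
      using circ unfolding is_circulation_def by blast
    then have z: "\<forall>v\<in>V. (\<Sum>e\<in>E. real_of_int (f e) * dd ends ori e v) = 0"
      using circ_iff[OF fE, THEN iffD1] by blast
    have eqs: "(\<Sum>e\<in>E. real_of_int (l e + int (kk c l ori2 e)) * dd ends ori e v) = (\<Sum>e\<in>E. real_of_int (f e) * dd ends ori e v)" for v
      by (rule sum.cong) (simp_all only: k)
    have "balanced_orientation V (sq_edges E c l) (sq_ends ends) (sq_weight c l) ori2"
      unfolding bal_iff[OF fE lc] o eqs by (rule z)
    then show "\<exists>ori2. balanced_orientation V (sq_edges E c l) (sq_ends ends) (sq_weight c l) ori2" by blast
  }
  {
    assume "\<exists>ori2. balanced_orientation V (sq_edges E c l) (sq_ends ends) (sq_weight c l) ori2"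
    then obtain ori2 where bal: "balanced_orientation V (sq_edges E c l) (sq_ends ends) (sq_weight c l) ori2" by blast
    define ori where "ori = (\<lambda>e. ori2 (e, None))"
    define f where "f e = l e + int (kk c l ori2 e)" for e
    have kle: "kk c l ori2 e \<le> nat (c e - l e)" for e
    proof -
      have "kk c l ori2 e \<le> card {..<nat (c e - l e)}" unfolding kk_def
        by (rule card_mono) auto
      then show ?thesis by simp
    qed
    have b: "\<forall>e\<in>E. l e \<le> f e \<and> f e \<le> c e"
    proof
      fix e assume e: "e \<in> E"
      have "int (kk c l ori2 e) \<le> int (nat (c e - l e))" using kle[of e] by (simp only: of_nat_le_iff)
      also have "\<dots> = c e - l e" using lc e by simp
      finally show "l e \<le> f e \<and> f e \<le> c e" unfolding f_def by simp
    qed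
    have "\<forall>v\<in>V. (\<Sum>e\<in>E. real_of_int (f e) * dd ends ori e v) = 0"
      using bal unfolding bal_iff[OF fE lc] f_def ori_def .
    then have "\<forall>v\<in>V. (\<Sum>a\<in>{a\<in>E. ohead ends ori a = v}. f a) = (\<Sum>a\<in>{a\<in>E. otail ends ori a = v}. f a)"
      using circ_iff[OF fE, THEN iffD2] by blast
    moreover have "\<forall>a\<in>E. 0 \<le> f a" proof
      fix a assume a: "a \<in> E"
      then show "0 \<le> f a" using assms(3) unfolding f_def by (meson add_increasing2 of_nat_0_le_iff)
    qed
    ultimately have "is_circulation V E (otail ends ori) (ohead ends ori) f"
      unfolding is_circulation_def by (intro conjI)
    then show "\<exists>ori f. is_circulation V E (otail ends ori) (ohead ends ori) f \<and> (\<forall>e\<in>E. l e \<le> f e \<and> f e \<le> c e)"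
      using b by blast
  }
qed

end
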